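(* Let $\mathcal{S}\in\mathscr{W}$ be $C^\infty$-smooth with an isolated umbilic point at the north or south pole. Then the umbilic slope at that pole, when it exists and is finite, is an odd integer greater than or equal to $3$. If furthermore $\alpha+1$ is the value of the umbilic slope at that pole, then the limit of $s(\theta)/\sin^\alpha\theta$ as $\theta$ approaches that pole is finite and non-zero.
   Context: $\mathscr{W}$ is the set of embedded $C^2$-smooth topological 2-spheres in $\mathbb{R}^3$ that are rotationally symmetric and strictly convex. A surface in $\mathscr{W}$ is parametrised by the inverse Gauss map with $\theta\in[0,\pi]$ the angle between the outward normal and the symmetry axis ($\theta=0$ north pole, $\theta=\pi$ south pole). With support function $r(\theta)=\vec X\cdot\hat n$, the radii of curvature are $r_1=\frac{\cos^2\theta}{\sin\theta}\frac{d}{d\theta}\left(\frac{r}{\cos\theta}\right)$, $r_2=r''+r$, and the astigmatism is $s=r_2-r_1$; umbilic points are where $s=0$. The umbilic slopes are $\mu_0=\lim_{\theta\to0}\frac{r_2(\theta)-r_2(0)}{r_1(\theta)-r_1(0)}$ and $\mu_\pi=\lim_{\theta\to\pi}\frac{r_2(\theta)-r_2(\pi)}{r_1(\theta)-r_1(\pi)}$. *)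

theory Defs
  imports "HOL-Analysis.Analysis"
begin

text \<open>A rotationally symmetric strictly convex sphere is described by its support
function r(theta), theta in [0,pi] the angle between outward normal and the symmetry axis.\<close>

definition C_infinity :: "(real \<Rightarrow> real) \<Rightarrow> bool" where
  "C_infinity f \<longleftrightarrow> (\<forall>n x. ((deriv ^^ n) f) differentiable (at x))"

text \<open>Smoothness of the surface: the support function, viewed as a function on the unit
sphere, is smooth; for a rotationally symmetric function this means that r extends to a
smooth function on the real line which is even about both poles theta = 0 and theta = pi.\<close>

definition smooth_rot_support :: "(real \<Rightarrow> real) \<Rightarrow> bool" where
  "smooth_rot_support r \<longleftrightarrow> C_infinity r \<and> (\<forall>t. r (- t) = r t) \<and> (\<forall>t. r (pi + t) = r (pi - t))"

text \<open>Radii of curvature.  r2 = r'' + r.  r1 = cos^2/sin * d/dtheta (r/cos) = r + r' cos/sin,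
extended by its limit value r''+r at the poles.\<close>

definition radius2 :: "(real \<Rightarrow> real) \<Rightarrow> real \<Rightarrow> real" where
  "radius2 r \<theta> = deriv (deriv r) \<theta> + r \<theta>"

definition radius1 :: "(real \<Rightarrow> real) \<Rightarrow> real \<Rightarrow> real" where
  "radius1 r \<theta> = (if sin \<theta> = 0 then deriv (deriv r) \<theta> + r \<theta>
                    else r \<theta> + deriv r \<theta> * cos \<theta> / sin \<theta>)"

definition astigmatism :: "(real \<Rightarrow> real) \<Rightarrow> real \<Rightarrow> real" where
  "astigmatism r \<theta> = radius2 r \<theta> - radius1 r \<theta>"

text \<open>Support function of a C-infinity smooth surface in W (strictly convex: both radii
of curvature are positive and finite).\<close>

definition smooth_W :: "(real \<Rightarrow> real) \<Rightarrow> bool" where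
  "smooth_W r \<longleftrightarrow> smooth_rot_support r \<and>
     (\<forall>\<theta>\<in>{0..pi}. radius1 r \<theta> > 0 \<and> radius2 r \<theta> > 0)"

end

theory Submission
  imports Defs
begin


lemma rdiff_fd: "(f::real\<Rightarrow>real) differentiable (at x) \<Longrightarrow> f field_differentiable (at x)"
  by (simp add: field_differentiable_def real_differentiable_def)

lemma Cinf_D: "C_infinity f \<Longrightarrow> ((deriv ^^ n) f has_real_derivative (deriv ^^ Suc n) f x) (at x)"
  unfolding C_infinity_def by (simp add: DERIV_deriv_iff_real_differentiable)

lemma Cinf_deriv: "C_infinity f \<Longrightarrow> C_infinity (deriv f)"
  unfolding C_infinity_def by (metis funpow_Suc_right o_apply)

lemma deriv_funpow_add:
  fixes f g :: "real \<Rightarrow> real"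
  assumes "\<And>k x. k < n \<Longrightarrow> (deriv ^^ k) f differentiable (at x)"
    and "\<And>k x. k < n \<Longrightarrow> (deriv ^^ k) g differentiable (at x)"
  shows "(deriv ^^ n) (\<lambda>x. f x + g x) = (\<lambda>x. (deriv ^^ n) f x + (deriv ^^ n) g x)"
  using assms
proof (induction n)
  case 0 then show ?case by simp
next
  case (Suc n)
  have IH: "(deriv ^^ n) (\<lambda>x. f x + g x) = (\<lambda>x. (deriv ^^ n) f x + (deriv ^^ n) g x)"
    using Suc by auto
  have d1: "\<And>x. (deriv ^^ n) f field_differentiable (at x)" "\<And>x. (deriv ^^ n) g field_differentiable (at x)"
    using Suc.prems[of n] by (simp_all add: rdiff_fd)
  show ?case by (simp add: IH fun_eq_iff d1)
qed

lemma Cinf_add: "C_infinity f \<Longrightarrow> C_infinity g \<Longrightarrow> C_infinity (\<lambda>x. f x + g x)"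
  unfolding C_infinity_def by (subst deriv_funpow_add) auto

lemma Cinf_const: "C_infinity (\<lambda>x. c)"
proof -
  have "(deriv ^^ Suc n) (\<lambda>x. c) = (\<lambda>x. 0)" for n
    by (induction n) auto
  then show ?thesis unfolding C_infinity_def
    by (metis differentiable_const old.nat.exhaust funpow_0)
qed

lemma Cinf_mult_aux:
  "\<forall>f g. C_infinity f \<longrightarrow> C_infinity g \<longrightarrow> (\<forall>x. (deriv ^^ n) (\<lambda>x. f x * g x) differentiable (at x))"
proof (induction n rule: less_induct)
  case (less n)
  show ?case
  proof (cases n)
    case 0 then show ?thesis
      by (auto simp: C_infinity_def intro!: differentiable_mult dest: spec[of _ 0])
  next
    case (Suc m)
    show ?thesis
    proof (intro allI impI)
      fix f g x assume f: "C_infinity f" and g: "C_infinity g"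
      have df: "\<And>x. f differentiable (at x)" and dg: "\<And>x. g differentiable (at x)"
        using f g unfolding C_infinity_def by (metis funpow_0)+
      have e: "deriv (\<lambda>x. f x * g x) = (\<lambda>x. deriv f x * g x + f x * deriv g x)"
        using df dg by (auto simp: deriv_mult rdiff_fd)
      have A: "\<And>k x. k \<le> m \<Longrightarrow> (deriv ^^ k) (\<lambda>x. deriv f x * g x) differentiable (at x)"
        using less Suc f g Cinf_deriv by auto
      have B: "\<And>k x. k \<le> m \<Longrightarrow> (deriv ^^ k) (\<lambda>x. f x * deriv g x) differentiable (at x)"
        using less Suc f g Cinf_deriv by auto
      have "(deriv ^^ n) (\<lambda>x. f x * g x) = (deriv ^^ m) (\<lambda>x. deriv f x * g x + f x * deriv g x)"
        using Suc e by (simp add: funpow_Suc_right del: funpow.simps)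
      also have "\<dots> = (\<lambda>x. (deriv ^^ m) (\<lambda>x. deriv f x * g x) x + (deriv ^^ m) (\<lambda>x. f x * deriv g x) x)"
        by (rule deriv_funpow_add) (use A B in auto)
      finally show "(deriv ^^ n) (\<lambda>x. f x * g x) differentiable (at x)"
        using A B by auto
    qed
  qed
qed

lemma Cinf_mult: "C_infinity f \<Longrightarrow> C_infinity g \<Longrightarrow> C_infinity (\<lambda>x. f x * g x)"
  using Cinf_mult_aux unfolding C_infinity_def by blast

lemma Cinf_sin: "C_infinity sin"
proof -
  have "(deriv ^^ n) sin = (\<lambda>x. sin (x + real n * (pi/2)))" for n
  proof (induction n)
    case (Suc n)
    have "deriv (\<lambda>x. sin (x + real n * (pi/2))) y = sin (y + real (Suc n) * (pi/2))" for y
    proof -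
      have "((\<lambda>x. sin (x + real n * (pi/2))) has_real_derivative cos (y + real n * (pi/2))) (at y)"
        by (auto intro!: derivative_eq_intros)
      moreover have "cos (y + real n * (pi/2)) = sin (y + real (Suc n) * (pi/2))"
        proof -
        have "y + real (Suc n) * (pi/2) = (y + real n * (pi/2)) + pi/2" by (simp add: algebra_simps)
        then show ?thesis by (simp only: sin_add cos_add) simp
      qed
      ultimately show ?thesis by (metis DERIV_imp_deriv)
    qed
    then show ?case using Suc by auto
  qed simp
  then show ?thesis unfolding C_infinity_def
    by (auto intro!: derivative_eq_intros simp: real_differentiable_def)
qed

lemma Cinf_cos: "C_infinity cos"
proof -
  have "cos = (\<lambda>x. sin x * 0 + sin x * 0 + (sin x * 0 + 1) * cos x)" by auto
  have "(deriv ^^ n) cos = (\<lambda>x. cos (x + real n * (pi/2)))" for n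
  proof (induction n)
    case (Suc n)
    have "deriv (\<lambda>x. cos (x + real n * (pi/2))) y = cos (y + real (Suc n) * (pi/2))" for y
    proof -
      have "((\<lambda>x. cos (x + real n * (pi/2))) has_real_derivative - sin (y + real n * (pi/2))) (at y)"
        by (auto intro!: derivative_eq_intros)
      moreover have "- sin (y + real n * (pi/2)) = cos (y + real (Suc n) * (pi/2))"
        proof -
        have "y + real (Suc n) * (pi/2) = (y + real n * (pi/2)) + pi/2" by (simp add: algebra_simps)
        then show ?thesis by (simp only: sin_add cos_add) simp
      qed
      ultimately show ?thesis by (metis DERIV_imp_deriv)
    qed
    then show ?case using Suc by auto
  qed simp
  then show ?thesis unfolding C_infinity_def
    by (auto intro!: derivative_eq_intros simp: real_differentiable_def)
qed

lemma Cinf_reflect: "C_infinity f \<Longrightarrow> C_infinity (\<lambda>t. f (a - t))"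
proof -
  assume f: "C_infinity f"
  have "(deriv ^^ n) (\<lambda>t. f (a - t)) = (\<lambda>t. (-1)^n * (deriv ^^ n) f (a - t))" for n
  proof (induction n)
    case (Suc n)
    have "deriv (\<lambda>t. (-1)^n * (deriv ^^ n) f (a - t)) y = (-1)^Suc n * (deriv ^^ Suc n) f (a - y)" for y
    proof -
      have "((\<lambda>t. (-1)^n * (deriv ^^ n) f (a - t)) has_real_derivative (-1)^n * ((deriv ^^ Suc n) f (a - y) * (-1))) (at y)"
        by (rule DERIV_cmult, rule DERIV_chain2[OF Cinf_D[OF f]]) (auto intro!: derivative_eq_intros)
      then show ?thesis by (simp add: DERIV_imp_deriv)
    qed
    then show ?case using Suc by auto
  qed simp
  then show ?thesis unfolding C_infinity_def
  proof (intro allI)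
    fix n x
    assume "\<And>n. (deriv ^^ n) (\<lambda>t. f (a - t)) = (\<lambda>t. (-1)^n * (deriv ^^ n) f (a - t))"
    moreover have "((\<lambda>t. (-1)^n * (deriv ^^ n) f (a - t)) has_real_derivative (-1)^n * ((deriv ^^ Suc n) f (a - x) * (-1))) (at x)"
        by (rule DERIV_cmult, rule DERIV_chain2[OF Cinf_D[OF f]]) (auto intro!: derivative_eq_intros)
    ultimately show "(deriv ^^ n) (\<lambda>t. f (a - t)) differentiable (at x)"
      by (auto simp: real_differentiable_def)
  qed
qed



lemma Cinf_cont: "C_infinity f \<Longrightarrow> isCont ((deriv ^^ n) f) x"
  using Cinf_D DERIV_isCont by blast

lemma deriv_funpow_deriv: "(deriv ^^ j) (deriv K) = (deriv ^^ Suc j) K"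
  by (simp add: funpow_Suc_right del: funpow.simps)

lemma taylor_lead:
  fixes f :: "real \<Rightarrow> real"
  assumes f: "C_infinity f" and m: "0 < m" and z: "\<forall>k<m. (deriv ^^ k) f 0 = 0"
  shows "((\<lambda>t. f t / t ^ m) \<longlongrightarrow> (deriv ^^ m) f 0 / fact m) (at 0)"
proof -
  define P where "P t \<xi> \<longleftrightarrow> (0 < \<bar>\<xi>\<bar> \<and> \<bar>\<xi>\<bar> < \<bar>t\<bar> \<and>
      f t = (\<Sum>k<m. ((deriv ^^ k) f 0 / fact k) * t ^ k) + ((deriv ^^ m) f \<xi> / fact m) * t ^ m)" for t \<xi>
  define xi where "xi t = (SOME \<xi>. P t \<xi>)" for t
  have ex: "\<exists>\<xi>. P t \<xi>" if "t \<noteq> 0" for t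
    unfolding P_def using Maclaurin_all_lt[of "\<lambda>k. (deriv ^^ k) f" f m t] m Cinf_D[OF f] that by auto
  have xi: "\<And>t. t \<noteq> 0 \<Longrightarrow> 0 < \<bar>xi t\<bar> \<and> \<bar>xi t\<bar> < \<bar>t\<bar> \<and>
      f t = (\<Sum>k<m. ((deriv ^^ k) f 0 / fact k) * t ^ k) + ((deriv ^^ m) f (xi t) / fact m) * t ^ m"
    unfolding xi_def using someI_ex[OF ex] unfolding P_def by blast
  have xi2: "t \<noteq> 0 \<Longrightarrow> f t / t ^ m = (deriv ^^ m) f (xi t) / fact m" for t
    using xi[of t] z by simp
  have "(xi \<longlongrightarrow> 0) (at 0)"
  proof (rule tendsto_sandwich[where f="\<lambda>t. - \<bar>t\<bar>" and h="\<lambda>t. \<bar>t\<bar>"])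
    have ev0: "\<forall>\<^sub>F t in at (0::real). t \<noteq> 0" by (simp add: eventually_at_filter)
    have a: "\<bar>xi t\<bar> < \<bar>t\<bar>" if "t \<noteq> 0" for t using xi that by blast
    show "\<forall>\<^sub>F n in at 0. - \<bar>n\<bar> \<le> xi n"
    proof (rule eventually_mono[OF ev0])
      fix t :: real assume "t \<noteq> 0" then have "\<bar>xi t\<bar> < \<bar>t\<bar>" by (rule a)
      then show "- \<bar>t\<bar> \<le> xi t" by arith
    qed
    show "\<forall>\<^sub>F n in at 0. xi n \<le> \<bar>n\<bar>"
    proof (rule eventually_mono[OF ev0])
      fix t :: real assume "t \<noteq> 0" then have "\<bar>xi t\<bar> < \<bar>t\<bar>" by (rule a)
      then show "xi t \<le> \<bar>t\<bar>" by arith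
    qed
  qed (auto intro!: tendsto_eq_intros)
  then have "((\<lambda>t. (deriv ^^ m) f (xi t) / fact m) \<longlongrightarrow> (deriv ^^ m) f 0 / fact m) (at 0)"
    by (intro tendsto_intros isCont_tendsto_compose[OF Cinf_cont[OF f]]) auto
  then show ?thesis
    by (rule Lim_transform_eventually) (auto simp: eventually_at_filter xi2)
qed

lemma not_flat:
  fixes K :: "real \<Rightarrow> real"
  assumes K: "C_infinity K" and flat: "\<forall>k. (deriv ^^ k) K 0 = 0"
    and nz: "\<forall>\<^sub>F t in at_right 0. K t \<noteq> 0"
    and lim: "((\<lambda>t. t * deriv K t / K t) \<longlongrightarrow> \<mu>) (at_right 0)"
  shows False
proof -
  define N :: nat where "N = nat \<lceil>\<mu>\<rceil> + 1"
  have muN: "\<mu> < real N" unfolding N_def by linarith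
  have "\<forall>\<^sub>F t in at_right 0. t * deriv K t / K t < real N"
    using order_tendstoD(2)[OF lim muN] .
  with nz have "\<forall>\<^sub>F t in at_right 0. K t \<noteq> 0 \<and> t * deriv K t / K t < real N"
    by (auto elim: eventually_elim2)
  then obtain b where b: "b > 0" "\<And>t. 0 < t \<Longrightarrow> t < b \<Longrightarrow> K t \<noteq> 0 \<and> t * deriv K t / K t < real N"
    unfolding eventually_at_right_field by auto
  define t0 where "t0 = b / 2"
  have t0: "0 < t0" "t0 < b" using b unfolding t0_def by auto
  define \<phi> where "\<phi> t = ln (K t ^ 2) - 2 * real N * ln t" for t
  have dK: "(K has_real_derivative deriv K t) (at t)" for t
    using Cinf_D[OF K, of 0] by simp
  have low: "\<phi> t0 \<le> \<phi> t" if t: "0 < t" "t \<le> t0" for t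
  proof (rule DERIV_nonpos_imp_nonincreasing[OF t(2)])
    fix x assume x: "t \<le> x" "x \<le> t0"
    then have x0: "0 < x" "x < b" using t t0 by auto
    have Kx: "K x \<noteq> 0" and q: "x * deriv K x / K x < real N" using b(2)[OF x0] by auto
    have "(\<phi> has_real_derivative (2 * K x * deriv K x) / (K x ^ 2) - 2 * real N / x) (at x)"
      unfolding \<phi>_def using x0 Kx
      by (auto intro!: derivative_eq_intros dK simp: power2_eq_square field_simps not_square_less_zero zero_less_mult_iff)
    moreover have "(2 * K x * deriv K x) / (K x ^ 2) - 2 * real N / x = (2 / x) * (x * deriv K x / K x - real N)"
      using x0 Kx by (simp add: field_simps power2_eq_square)
    moreover have "(2 / x) * (x * deriv K x / K x - real N) \<le> 0"
      using x0 q by (intro mult_nonneg_nonpos) auto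
    ultimately show "\<exists>y. (\<phi> has_real_derivative y) (at x) \<and> y \<le> 0" by auto
  qed
  define C where "C = exp (\<phi> t0)"
  have C: "C > 0" unfolding C_def by simp
  have lowK: "C * t ^ (2 * N) \<le> K t ^ 2" if t: "0 < t" "t \<le> t0" for t
  proof -
    have Kt: "K t \<noteq> 0" using b(2)[of t] t t0 by auto
    have "\<phi> t0 \<le> ln (K t ^ 2) - 2 * real N * ln t" using low[OF t] unfolding \<phi>_def by simp
    then have "exp (\<phi> t0) \<le> exp (ln (K t ^ 2) - 2 * real N * ln t)" by simp
    also have "\<dots> = K t ^ 2 / exp (2 * real N * ln t)" using Kt by (simp add: exp_diff)
    also have "exp (2 * real N * ln t) = t ^ (2 * N)"
      using t by (metis exp_ln_iff exp_of_nat_mult ln_realpow mult.assoc of_nat_numeral of_nat_mult zero_less_power)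
    finally show ?thesis using t by (simp add: field_simps C_def)
  qed
  have "((\<lambda>t. K t / t ^ (N + 1)) \<longlongrightarrow> (deriv ^^ (N+1)) K 0 / fact (N+1)) (at 0)"
    by (rule taylor_lead[OF K]) (use flat in auto)
  moreover have z: "(deriv ^^ (N+1)) K 0 / fact (N+1) = 0" using flat[rule_format, of "N+1"] by (simp del: funpow.simps)
  ultimately have "((\<lambda>t. K t / t ^ (N + 1)) \<longlongrightarrow> 0) (at 0)" by metis
  then have "((\<lambda>t. K t / t ^ (N + 1)) \<longlongrightarrow> 0) (at_right 0)"
    by (simp add: filterlim_at_split)
  then have "((\<lambda>t. (K t / t ^ (N + 1))^2) \<longlongrightarrow> 0) (at_right 0)"
    using tendsto_power[of _ 0 _ 2] by fastforce
  then have ev1: "\<forall>\<^sub>F t in at_right 0. (K t / t ^ (N + 1))^2 < C"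
    using order_tendstoD(2) C by blast
  have ev2: "\<forall>\<^sub>F t in at_right 0. 0 < t \<and> t \<le> t0 \<and> t < 1"
    unfolding eventually_at_right_field using t0 by (intro exI[of _ "min t0 1"]) auto
  obtain t where t: "0 < t" "t \<le> t0" "t < 1" "(K t / t ^ (N + 1))^2 < C"
    using eventually_happens'[OF _ eventually_conj[OF ev1 ev2]] by auto
  have "C * t ^ (2 * N) \<le> K t ^ 2" using lowK t by auto
  also have "K t ^ 2 = (K t / t ^ (N + 1))^2 * t^2 * t ^ (2 * N)"
    using t by (simp add: field_simps power_mult_distrib power_add power_mult[symmetric] mult_2)
  also have "\<dots> < C * t ^ (2 * N)"
  proof -
    have "(K t / t ^ (N + 1))^2 * t^2 < C"
    proof -
      have "t^2 \<le> 1" using t by (simp add: power_le_one)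
      moreover have "(K t / t ^ (N + 1))^2 \<ge> 0" by simp
      ultimately have "(K t / t ^ (N + 1))^2 * t^2 \<le> (K t / t ^ (N + 1))^2"
        by (simp add: mult_left_le)
      then show ?thesis using t(4) by linarith
    qed
    then show ?thesis using t by (intro mult_strict_right_mono) auto
  qed
  finally show False by simp
qed


lemma aux_alg:
  fixes a x y D K :: real
  assumes "a \<noteq> 0" "x \<noteq> 0" "y \<noteq> 0"
  shows "(D / x^m) * (x/a)^m / y - (K/x^(Suc m)) * (x/a)^(Suc m) = (D/y - K/a)/a^m"
  using assms by (simp add: power_divide field_simps)

lemma core:
  fixes K :: "real \<Rightarrow> real"
  assumes K: "C_infinity K" and odd: "\<And>t. K (- t) = - K t" and d0: "deriv K 0 = 0"
    and nz: "\<forall>\<^sub>F t in at_right 0. K t \<noteq> 0"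
    and lim: "((\<lambda>t. t * deriv K t / K t) \<longlongrightarrow> \<mu>) (at_right 0)"
  shows "\<exists>n::nat. odd n \<and> n \<ge> 3 \<and> \<mu> = real n \<and> (\<exists>c. c \<noteq> 0 \<and>
           ((\<lambda>t. (deriv K t / cos t - K t / sin t) / sin t powr (real n - 1)) \<longlongrightarrow> c) (at_right 0))"
proof -
  have "\<exists>k. (deriv ^^ k) K 0 \<noteq> 0"
    using not_flat[OF K _ nz lim] by blast
  define n where "n = (LEAST k. (deriv ^^ k) K 0 \<noteq> 0)"
  have Dn: "(deriv ^^ n) K 0 \<noteq> 0" unfolding n_def using LeastI_ex[OF \<open>\<exists>k. _\<close>] .
  have Dlt: "\<forall>k<n. (deriv ^^ k) K 0 = 0" unfolding n_def using not_less_Least by blast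
  have K0: "K 0 = 0" using odd[of 0] by simp
  have n0: "n \<noteq> 0" proof assume "n = 0" then show False using Dn K0 by simp qed
  have n1: "n \<noteq> 1" using Dn d0 by auto
  define c where "c = (deriv ^^ n) K 0 / fact n"
  have c0: "c \<noteq> 0" unfolding c_def using Dn by simp
  have L1: "((\<lambda>t. K t / t ^ n) \<longlongrightarrow> c) (at 0)"
    unfolding c_def by (rule taylor_lead[OF K]) (use n0 Dlt in auto)
  have L2': "((\<lambda>t. deriv K t / t ^ (n - 1)) \<longlongrightarrow> (deriv ^^ (n-1)) (deriv K) 0 / fact (n-1)) (at 0)"
  proof (rule taylor_lead[OF Cinf_deriv[OF K]])
    show "0 < n - 1" using n0 n1 by auto
    show "\<forall>k<n - 1. (deriv ^^ k) (deriv K) 0 = 0"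
      using Dlt by (auto simp: deriv_funpow_deriv simp del: funpow.simps)
  qed
  have "(deriv ^^ (n-1)) (deriv K) 0 / fact (n-1) = real n * c"
  proof -
    have "(deriv ^^ (n-1)) (deriv K) = (deriv ^^ n) K"
      using n0 by (simp only: deriv_funpow_deriv) (simp del: funpow.simps)
    moreover have "fact n = real n * fact (n - 1)"
      using n0 by (simp add: fact_reduce)
    ultimately show ?thesis unfolding c_def using n0 by (simp add: field_simps)
  qed
  with L2' have L2: "((\<lambda>t. deriv K t / t ^ (n - 1)) \<longlongrightarrow> real n * c) (at 0)" by simp
  have L1r: "((\<lambda>t. K t / t ^ n) \<longlongrightarrow> c) (at_right 0)" and L2r: "((\<lambda>t. deriv K t / t ^ (n - 1)) \<longlongrightarrow> real n * c) (at_right 0)"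
    using L1 L2 by (simp_all add: filterlim_at_split)
  have oddn: "odd n"
  proof (rule ccontr)
    assume ev: "\<not> odd n"
    have "((\<lambda>t. K t / t ^ n) \<longlongrightarrow> c) (at_left 0)" using L1 by (simp add: filterlim_at_split)
    then have "((\<lambda>t. K (- t) / (- t) ^ n) \<longlongrightarrow> c) (at_right 0)"
      unfolding at_left_minus by (simp add: filterlim_filtermap)
    moreover have "(\<lambda>t. K (- t) / (- t) ^ n) = (\<lambda>t. - (K t / t ^ n))"
      using ev by (auto simp: odd)
    ultimately have "((\<lambda>t. - (K t / t ^ n)) \<longlongrightarrow> c) (at_right 0)" by simp
    moreover have "((\<lambda>t. - (K t / t ^ n)) \<longlongrightarrow> - c) (at_right 0)"
      using L1r by (intro tendsto_intros)
    ultimately have "c = - c" using tendsto_unique[OF trivial_limit_at_right_real] by blast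
    with c0 show False by simp
  qed
  have n3: "n \<ge> 3" using oddn n0 n1 by presburger
  have mu: "\<mu> = real n"
  proof -
    have "((\<lambda>t. (deriv K t / t ^ (n - 1)) / (K t / t ^ n)) \<longlongrightarrow> real n * c / c) (at_right 0)"
      using L1r L2r c0 by (intro tendsto_intros) auto
    moreover have "\<forall>\<^sub>F t in at_right 0. (deriv K t / t ^ (n - 1)) / (K t / t ^ n) = t * deriv K t / K t"
    proof -
      have "\<forall>\<^sub>F t in at_right 0. (0::real) < t" by (simp add: eventually_at_right_less)
      then show ?thesis
      proof (rule eventually_mono)
        fix t :: real assume t: "0 < t"
        have "t ^ n = t * t ^ (n - 1)" using n0 by (metis power_eq_if)
        then show "(deriv K t / t ^ (n - 1)) / (K t / t ^ n) = t * deriv K t / K t"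
          using t by (simp add: field_simps)
      qed
    qed
    ultimately have "((\<lambda>t. t * deriv K t / K t) \<longlongrightarrow> real n) (at_right 0)"
      using c0 by (simp add: tendsto_cong)
    then show ?thesis using tendsto_unique[OF trivial_limit_at_right_real lim] by simp
  qed
  have sc: "((\<lambda>t::real. t / sin t) \<longlongrightarrow> 1) (at_right 0)"
  proof -
    have "((\<lambda>t::real. sin t / t) \<longlongrightarrow> 1) (at 0)"
      using DERIV_sin[of 0] unfolding has_field_derivative_iff by simp
    then have "((\<lambda>t::real. inverse (sin t / t)) \<longlongrightarrow> inverse 1) (at 0)"
      by (intro tendsto_inverse) auto
    then show ?thesis by (simp add: filterlim_at_split)
  qed
  have co: "((\<lambda>t::real. cos t) \<longlongrightarrow> 1) (at_right 0)"
    by (metis cos_zero isCont_def continuous_at_split isCont_cos continuous_within)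
  have lim3: "((\<lambda>t. (deriv K t / t ^ (n - 1)) * (t / sin t) ^ (n - 1) / cos t - (K t / t ^ n) * (t / sin t) ^ n)
     \<longlongrightarrow> real n * c * 1 ^ (n - 1) / 1 - c * 1 ^ n) (at_right 0)"
    using L1r L2r sc co by (intro tendsto_intros) auto
  have ev3: "\<forall>\<^sub>F t in at_right 0. (deriv K t / t ^ (n - 1)) * (t / sin t) ^ (n - 1) / cos t - (K t / t ^ n) * (t / sin t) ^ n
      = (deriv K t / cos t - K t / sin t) / sin t powr (real n - 1)"
  proof -
    have "\<forall>\<^sub>F t in at_right 0. (0::real) < t \<and> t < pi / 2"
      unfolding eventually_at_right_field by (intro exI[of _ "pi/2"]) auto
    then show ?thesis
    proof (rule eventually_mono)
      fix t :: real assume t: "0 < t \<and> t < pi / 2"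
      have s: "sin t > 0" using t by (intro sin_gt_zero) auto
      have cc: "cos t > 0" using t by (intro cos_gt_zero) auto
      have pw: "sin t powr (real n - 1) = sin t ^ (n - 1)"
        using s n0 by (simp add: powr_realpow[symmetric] of_nat_diff)
      have sn: "sin t ^ n = sin t * sin t ^ (n - 1)" "t ^ n = t * t ^ (n - 1)" using n0 by (metis power_eq_if)+
      show "(deriv K t / t ^ (n - 1)) * (t / sin t) ^ (n - 1) / cos t - (K t / t ^ n) * (t / sin t) ^ n
      = (deriv K t / cos t - K t / sin t) / sin t powr (real n - 1)"
        unfolding pw using aux_alg[of "sin t" t "cos t" "deriv K t" "n - 1" "K t"] s cc t n0 by simp
    qed
  qed
  have "((\<lambda>t. (deriv K t / cos t - K t / sin t) / sin t powr (real n - 1)) \<longlongrightarrow> (real n - 1) * c) (at_right 0)"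
    using Lim_transform_eventually[OF lim3 ev3] by (simp add: algebra_simps)
  moreover have "(real n - 1) * c \<noteq> 0" using c0 n3 by simp
  ultimately show ?thesis using oddn n3 mu by blast
qed



lemma lim_t_sin: "((\<lambda>t::real. t / sin t) \<longlongrightarrow> 1) (at_right 0)"
proof -
  have "((\<lambda>t::real. sin t / t) \<longlongrightarrow> 1) (at 0)"
    using DERIV_sin[of 0] unfolding has_field_derivative_iff by simp
  then have "((\<lambda>t::real. inverse (sin t / t)) \<longlongrightarrow> inverse 1) (at 0)"
    by (intro tendsto_inverse) auto
  then show ?thesis by (simp add: filterlim_at_split)
qed

lemma lim_cos: "((\<lambda>t::real. cos t) \<longlongrightarrow> 1) (at_right 0)"
  by (metis cos_zero isCont_def continuous_at_split isCont_cos continuous_within)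

lemma ev_small: "\<forall>\<^sub>F t in at_right 0. (0::real) < t \<and> t < pi / 2"
  unfolding eventually_at_right_field by (intro exI[of _ "pi/2"]) auto

lemma reduce:
  fixes K A B S :: "real \<Rightarrow> real"
  assumes K: "C_infinity K" and odd: "\<And>t. K (- t) = - K t" and d0: "deriv K 0 = 0"
    and hK: "\<forall>\<^sub>F t in at_right 0. K t = sin t * B t \<and> deriv K t = cos t * A t \<and> S t = A t - B t"
    and nzB: "\<forall>\<^sub>F t in at_right 0. B t \<noteq> 0"
    and lim: "((\<lambda>t. A t / B t) \<longlongrightarrow> \<mu>) (at_right 0)"
  shows "(\<exists>k::int. \<mu> = 2 * of_int k + 1) \<and> \<mu> \<ge> 3 \<and>
         (\<forall>\<alpha>. \<mu> = \<alpha> + 1 \<longrightarrow>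
            (\<exists>L. L \<noteq> 0 \<and> ((\<lambda>t. S t / sin t powr \<alpha>) \<longlongrightarrow> L) (at_right 0)))"
proof -
  have ev: "\<forall>\<^sub>F t in at_right 0. (0 < t \<and> t < pi / 2) \<and> (K t = sin t * B t \<and> deriv K t = cos t * A t \<and> S t = A t - B t) \<and> B t \<noteq> 0"
    using ev_small hK nzB by (auto elim: eventually_elim2 intro: eventually_conj)
  have sc: "0 < t \<Longrightarrow> t < pi / 2 \<Longrightarrow> sin t > 0 \<and> cos t > 0" for t
    by (auto intro!: sin_gt_zero cos_gt_zero)
  have nz: "\<forall>\<^sub>F t in at_right 0. K t \<noteq> 0"
    using ev by (rule eventually_mono) (use sc in force)
  have lim2: "((\<lambda>t. (t / sin t * cos t) * (A t / B t)) \<longlongrightarrow> (1 * 1) * \<mu>) (at_right 0)"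
    using lim_t_sin lim_cos lim by (intro tendsto_intros)
  have "\<forall>\<^sub>F t in at_right 0. (t / sin t * cos t) * (A t / B t) = t * deriv K t / K t"
    using ev by (rule eventually_mono) (use sc in auto)
  with lim2 have lim3: "((\<lambda>t. t * deriv K t / K t) \<longlongrightarrow> \<mu>) (at_right 0)"
    using Lim_transform_eventually by fastforce
  obtain n :: nat and c where n: "odd n" "n \<ge> 3" "\<mu> = real n" "c \<noteq> 0"
    and cl: "((\<lambda>t. (deriv K t / cos t - K t / sin t) / sin t powr (real n - 1)) \<longlongrightarrow> c) (at_right 0)"
    using core[OF K odd d0 nz lim3] by blast
  have P1: "\<exists>k::int. \<mu> = 2 * of_int k + 1"
  proof -
    obtain m where "n = 2 * m + 1" using n(1) oddE by blast
    then show ?thesis using n(3) by (intro exI[of _ "int m"]) simp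
  qed
  have P3: "\<exists>L. L \<noteq> 0 \<and> ((\<lambda>t. S t / sin t powr \<alpha>) \<longlongrightarrow> L) (at_right 0)" if "\<mu> = \<alpha> + 1" for \<alpha>
  proof (intro exI conjI)
    show "c \<noteq> 0" by (rule n(4))
    have a: "\<alpha> = real n - 1" using that n(3) by simp
    have "\<forall>\<^sub>F t in at_right 0. (deriv K t / cos t - K t / sin t) / sin t powr (real n - 1) = S t / sin t powr \<alpha>"
    proof (rule eventually_mono[OF ev])
      fix t assume h: "(0 < t \<and> t < pi / 2) \<and> (K t = sin t * B t \<and> deriv K t = cos t * A t \<and> S t = A t - B t) \<and> B t \<noteq> 0"
      then have "sin t > 0" "cos t > 0" using sc by auto
      then show "(deriv K t / cos t - K t / sin t) / sin t powr (real n - 1) = S t / sin t powr \<alpha>"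
        using h a by simp
    qed
    then show "((\<lambda>t. S t / sin t powr \<alpha>) \<longlongrightarrow> c) (at_right 0)"
      using Lim_transform_eventually cl by fastforce
  qed
  show ?thesis using P1 P3 n by auto
qed


lemma deriv_sym:
  fixes f :: "real \<Rightarrow> real"
  assumes d: "\<And>x. (f has_real_derivative deriv f x) (at x)" and s: "\<And>t. f (a + t) = f (a - t)"
  shows "deriv f (a + t) = - deriv f (a - t)"
proof -
  have fe: "f = (\<lambda>x. f (2 * a - x))"
  proof
    fix x show "f x = f (2 * a - x)" using s[of "x - a"] by (simp add: algebra_simps)
  qed
  have "((\<lambda>x. f (2 * a - x)) has_real_derivative deriv f (2 * a - (a + t)) * (- 1)) (at (a + t))"
    by (rule DERIV_chain2[OF d]) (auto intro!: derivative_eq_intros)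
  then have "deriv (\<lambda>x. f (2 * a - x)) (a + t) = - deriv f (a - t)"
    by (auto dest!: DERIV_imp_deriv simp: algebra_simps)
  then show ?thesis using fe by metis
qed

lemma at_left_flip: "at_left (a::real) = filtermap (\<lambda>t. a - t) (at_right 0)"
proof -
  have "at_left a = filtermap uminus (filtermap (\<lambda>x. x + - a) (at_right 0))"
    by (simp add: at_left_minus at_right_to_0[of "- a"])
  also have "\<dots> = filtermap (\<lambda>t. a - t) (at_right 0)"
    by (simp add: filtermap_filtermap)
  finally show ?thesis .
qed

theorem theorem2p3:
  fixes r :: "real \<Rightarrow> real" and p \<mu> :: real
  assumes "smooth_W r"
    and "p \<in> {0, pi}"
    and "\<forall>\<^sub>F \<theta> in at p within {0..pi}. astigmatism r \<theta> \<noteq> 0"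
    and "\<forall>\<^sub>F \<theta> in at p within {0..pi}. radius1 r \<theta> \<noteq> radius1 r p"
    and "((\<lambda>\<theta>. (radius2 r \<theta> - radius2 r p) / (radius1 r \<theta> - radius1 r p)) \<longlongrightarrow> \<mu>)
           (at p within {0..pi})"
  shows "(\<exists>k::int. \<mu> = 2 * of_int k + 1) \<and> \<mu> \<ge> 3 \<and>
         (\<forall>\<alpha>. \<mu> = \<alpha> + 1 \<longrightarrow>
            (\<exists>L. L \<noteq> 0 \<and> ((\<lambda>\<theta>. astigmatism r \<theta> / sin \<theta> powr \<alpha>) \<longlongrightarrow> L) (at p within {0..pi})))"
proof -
  have Cr: "C_infinity r" and ev: "\<And>t. r (- t) = r t" and rf: "\<And>t. r (pi + t) = r (pi - t)"
    using assms(1) unfolding smooth_W_def smooth_rot_support_def by auto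
  have dr: "(r has_real_derivative deriv r x) (at x)" for x using Cinf_D[OF Cr, of 0] by simp
  have d2r: "(deriv r has_real_derivative deriv (deriv r) x) (at x)" for x using Cinf_D[OF Cr, of 1] by simp
  define c where "c = r p + deriv (deriv r) p"
  define G where "G \<theta> = sin \<theta> * (r \<theta> - c) + deriv r \<theta> * cos \<theta>" for \<theta>
  have CG: "C_infinity G"
  proof -
    have e: "G = (\<lambda>\<theta>. sin \<theta> * (r \<theta> + - c) + deriv r \<theta> * cos \<theta>)"
      by (simp add: G_def fun_eq_iff)
    have "C_infinity (\<lambda>\<theta>. sin \<theta> * (r \<theta> + - c) + deriv r \<theta> * cos \<theta>)"
      by (intro Cinf_add Cinf_mult Cinf_sin Cinf_cos Cinf_deriv Cr Cinf_const)
    then show ?thesis using e by simp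
  qed
  have DG: "(G has_real_derivative cos \<theta> * (radius2 r \<theta> - c)) (at \<theta>)" for \<theta>
  proof -
    have "(G has_real_derivative cos \<theta> * (r \<theta> - c) + sin \<theta> * deriv r \<theta> + (deriv (deriv r) \<theta> * cos \<theta> + deriv r \<theta> * (- sin \<theta>))) (at \<theta>)"
      unfolding G_def[abs_def]
      by (rule derivative_eq_intros DERIV_mult' DERIV_diff dr d2r DERIV_sin DERIV_cos DERIV_const | simp)+
    moreover have "cos \<theta> * (r \<theta> - c) + sin \<theta> * deriv r \<theta> + (deriv (deriv r) \<theta> * cos \<theta> + deriv r \<theta> * (- sin \<theta>))
      = cos \<theta> * (radius2 r \<theta> - c)"
      by (simp add: radius2_def algebra_simps)
    ultimately show ?thesis by simp
  qed
  have dG: "deriv G \<theta> = cos \<theta> * (radius2 r \<theta> - c)" for \<theta> using DG DERIV_imp_deriv by blast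
  have sinp: "sin p = 0" using assms(2) by auto
  have r1p: "radius1 r p = c" and r2p: "radius2 r p = c"
    using sinp by (simp_all add: radius1_def radius2_def c_def)
  have GB: "sin \<theta> \<noteq> 0 \<Longrightarrow> G \<theta> = sin \<theta> * (radius1 r \<theta> - radius1 r p)" for \<theta>
    unfolding r1p by (simp add: G_def radius1_def field_simps)
  have ast: "astigmatism r \<theta> = (radius2 r \<theta> - radius2 r p) - (radius1 r \<theta> - radius1 r p)" for \<theta>
    by (simp add: astigmatism_def r1p r2p)
  have ev0pi: "\<forall>\<^sub>F t in at_right 0. (0::real) < t \<and> t < pi"
    unfolding eventually_at_right_field by (intro exI[of _ pi]) auto
  have sinpos: "0 < t \<Longrightarrow> t < pi \<Longrightarrow> sin t \<noteq> 0" for t using sin_gt_zero by force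
  show ?thesis
  proof (cases "p = 0")
    case True
    have F: "at p within {0..pi} = at_right 0" using True by (simp add: at_within_Icc_at_right)
    have odd: "G (- t) = - G t" for t
    proof -
      have "deriv r (0 + t) = - deriv r (0 - t)" by (rule deriv_sym[OF dr]) (use ev in simp)
      then show ?thesis by (simp add: G_def ev)
    qed
    have d0: "deriv G 0 = 0" using True dG r2p by simp
    have hK: "\<forall>\<^sub>F t in at_right 0. G t = sin t * (radius1 r t - radius1 r p) \<and>
        deriv G t = cos t * (radius2 r t - radius2 r p) \<and>
        astigmatism r t = (radius2 r t - radius2 r p) - (radius1 r t - radius1 r p)"
      using ev0pi by (rule eventually_mono) (use GB sinpos dG r2p ast in auto)
    have "(\<exists>k::int. \<mu> = 2 * of_int k + 1) \<and> \<mu> \<ge> 3 \<and>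
         (\<forall>\<alpha>. \<mu> = \<alpha> + 1 \<longrightarrow>
            (\<exists>L. L \<noteq> 0 \<and> ((\<lambda>t. astigmatism r t / sin t powr \<alpha>) \<longlongrightarrow> L) (at_right 0)))"
      by (rule reduce[OF CG odd d0 hK]) (use assms(4,5) F in \<open>simp_all add: eventually_mono\<close>)
    then show ?thesis unfolding F .
  next
    case False
    then have pp: "p = pi" using assms(2) by auto
    have F: "at p within {0..pi} = at_left pi" using pp by (simp add: at_within_Icc_at_left)
    define K where "K t = G (pi - t)" for t
    have CK: "C_infinity K" unfolding K_def[abs_def] by (rule Cinf_reflect[OF CG])
    have DK: "(K has_real_derivative cos t * (radius2 r (pi - t) - c)) (at t)" for t
    proof -
      have "(K has_real_derivative cos (pi - t) * (radius2 r (pi - t) - c) * (- 1)) (at t)"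
        unfolding K_def[abs_def] by (rule DERIV_chain2[OF DG]) (auto intro!: derivative_eq_intros)
      then show ?thesis by simp
    qed
    have dK: "deriv K t = cos t * (radius2 r (pi - t) - radius2 r p)" for t
      using DK DERIV_imp_deriv r2p by metis
    have odd: "K (- t) = - K t" for t
    proof -
      have "deriv r (pi + t) = - deriv r (pi - t)" by (rule deriv_sym[OF dr rf])
      then show ?thesis by (simp add: K_def G_def rf sin_add cos_add sin_diff cos_diff)
    qed
    have d0: "deriv K 0 = 0" using dK pp by simp
    have hK: "\<forall>\<^sub>F t in at_right 0. K t = sin t * (radius1 r (pi - t) - radius1 r p) \<and>
        deriv K t = cos t * (radius2 r (pi - t) - radius2 r p) \<and>
        astigmatism r (pi - t) = (radius2 r (pi - t) - radius2 r p) - (radius1 r (pi - t) - radius1 r p)"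
      using ev0pi by (rule eventually_mono) (use GB sinpos dK ast in \<open>auto simp: K_def\<close>)
    have nzB: "\<forall>\<^sub>F t in at_right 0. radius1 r (pi - t) - radius1 r p \<noteq> 0"
      using assms(4) unfolding F at_left_flip eventually_filtermap by simp
    have lim: "((\<lambda>t. (radius2 r (pi - t) - radius2 r p) / (radius1 r (pi - t) - radius1 r p)) \<longlongrightarrow> \<mu>) (at_right 0)"
      using assms(5) unfolding F at_left_flip filterlim_filtermap by simp
    have R: "(\<exists>k::int. \<mu> = 2 * of_int k + 1) \<and> \<mu> \<ge> 3 \<and>
         (\<forall>\<alpha>. \<mu> = \<alpha> + 1 \<longrightarrow>
            (\<exists>L. L \<noteq> 0 \<and> ((\<lambda>t. astigmatism r (pi - t) / sin t powr \<alpha>) \<longlongrightarrow> L) (at_right 0)))"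
      by (rule reduce[OF CK odd d0 hK nzB lim])
    show ?thesis unfolding F at_left_flip filterlim_filtermap using R by simp
  qed
qed


end
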